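(* There is a homotopy equivalence $$SU(2)\times SU(2)\setminus Hom(\mathbb Z\oplus\mathbb Z,SU(2))\ \simeq\ SO(3).$$
   Context: $Hom(\mathbb Z\oplus\mathbb Z,SU(2))$ is identified with the subspace of $SU(2)\times SU(2)$ consisting of ordered pairs of commuting elements; the left side is its complement in $SU(2)\times SU(2)$. *)

theory Defs
  imports "HOL-Analysis.Analysis"
begin

definition conj_transpose :: "complex^2^2 \<Rightarrow> complex^2^2" where
  "conj_transpose A = (\<chi> i j. cnj (A $ j $ i))"

definition SU2 :: "(complex^2^2) set" where
  "SU2 = {A. A ** conj_transpose A = mat 1 \<and> det A = 1}"

definition SO3 :: "(real^3^3) set" where
  "SO3 = {A. orthogonal_matrix A \<and> det A = 1}"

definition Hom_Z2_SU2 :: "((complex^2^2) \<times> (complex^2^2)) set" where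
  "Hom_Z2_SU2 = {(A, B). A \<in> SU2 \<and> B \<in> SU2 \<and> A ** B = B ** A}"

end

theory Submission
  imports Defs
begin

definition Qm :: "real \<Rightarrow> real^3 \<Rightarrow> complex^2^2" where
 "Qm r u = (\<chi> i j. if i = 1 then (if j = 1 then Complex r (u$1) else Complex (u$2) (u$3))
     else (if j = 1 then Complex (-(u$2)) (u$3) else Complex r (-(u$1))))"

definition vecA :: "complex^2^2 \<Rightarrow> real^3" where
 "vecA A = (\<chi> i. if i = 1 then Im (A$1$1) else if i = 2 then Re (A$1$2) else Im (A$1$2))"

definition re0 :: "complex^2^2 \<Rightarrow> real" where "re0 A = Re (A$1$1)"

lemma Qm_nth[simp]: "Qm r u $ 1 $ 1 = Complex r (u$1)" "Qm r u $ 1 $ 2 = Complex (u$2) (u$3)"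
  "Qm r u $ 2 $ 1 = Complex (-(u$2)) (u$3)" "Qm r u $ 2 $ 2 = Complex r (-(u$1))"
  by (simp_all add: Qm_def)

lemma vecA_Qm[simp]: "vecA (Qm r u) = u"
  by (simp add: vecA_def vec_eq_iff forall_3)

lemma re0_Qm[simp]: "re0 (Qm r u) = r" by (simp add: re0_def)

lemma inner3: "(u::real^3) \<bullet> w = u$1*w$1 + u$2*w$2 + u$3*w$3"
  by (simp add: inner_vec_def sum_3)

lemma Qm_SU2: "Qm r u \<in> SU2 \<longleftrightarrow> r^2 + u \<bullet> u = 1"
  unfolding SU2_def
  by (auto simp: vec_eq_iff forall_2 matrix_matrix_mult_def sum_2 conj_transpose_def det_2 mat_def
     complex_eq_iff inner3 power2_eq_square algebra_simps)

lemma SU2_Qm: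
  assumes "A \<in> SU2" shows "A = Qm (re0 A) (vecA A)"
proof -
  let ?a = "A$1$1" and ?b = "A$1$2" and ?c = "A$2$1" and ?d = "A$2$2"
  have e: "?a * cnj ?a + ?b * cnj ?b = 1" "?a * cnj ?c + ?b * cnj ?d = 0"
     "?c * cnj ?a + ?d * cnj ?b = 0" "?a * ?d - ?b * ?c = 1"
    using assms unfolding SU2_def
    by (auto simp: vec_eq_iff forall_2 matrix_matrix_mult_def sum_2 conj_transpose_def det_2 mat_def)
  have e3: "?c * cnj ?a = - (?d * cnj ?b)" using e(3) by (simp add: eq_neg_iff_add_eq_0)
  have d: "?d = cnj ?a"
  proof -
    have "cnj ?a = cnj ?a * (?a * ?d - ?b * ?c)" using e by simp
    also have "\<dots> = ?d * (?a * cnj ?a) - ?b * (?c * cnj ?a)" by (simp add: algebra_simps)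
    also have "\<dots> = ?d * (?a * cnj ?a) + ?b * (?d * cnj ?b)" by (simp add: e3)
    also have "\<dots> = ?d * (?a * cnj ?a + ?b * cnj ?b)" by (simp add: algebra_simps)
    also have "\<dots> = ?d" using e(1) by simp
    finally show ?thesis by simp
  qed
  have c: "?c = - cnj ?b"
  proof -
    have "- cnj ?b = - cnj ?b * (?a * ?d - ?b * ?c)" using e by simp
    also have "\<dots> = - ?a * (?d * cnj ?b) + ?c * (?b * cnj ?b)" by (simp add: algebra_simps)
    also have "\<dots> = ?a * (?c * cnj ?a) + ?c * (?b * cnj ?b)" by (simp add: e3)
    also have "\<dots> = ?c * (?a * cnj ?a + ?b * cnj ?b)" by (simp add: algebra_simps)
    also have "\<dots> = ?c" using e(1) by simp
    finally show ?thesis by simp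
  qed
  show ?thesis using c d
    by (auto simp: vec_eq_iff forall_2 re0_def vecA_def complex_eq_iff)
qed

lemma SU2_iff: "A \<in> SU2 \<longleftrightarrow> A = Qm (re0 A) (vecA A) \<and> (re0 A)^2 + vecA A \<bullet> vecA A = 1"
  by (metis Qm_SU2 SU2_Qm)

lemma Qm_commute: "Qm r u ** Qm s w = Qm s w ** Qm r u \<longleftrightarrow> cross3 u w = 0"
  by (auto simp: vec_eq_iff forall_2 forall_3 matrix_matrix_mult_def sum_2 complex_eq_iff cross3_def algebra_simps)

lemma X_iff: "p \<in> (SU2 \<times> SU2) - Hom_Z2_SU2 \<longleftrightarrow>
   fst p \<in> SU2 \<and> snd p \<in> SU2 \<and> cross3 (vecA (fst p)) (vecA (snd p)) \<noteq> 0"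
proof -
  obtain A B where p: "p = (A,B)" by (cases p)
  have c: "A ** B = B ** A \<longleftrightarrow> cross3 (vecA A) (vecA B) = 0" if "A \<in> SU2" "B \<in> SU2"
  proof -
    have "A ** B = B ** A \<longleftrightarrow> Qm (re0 A) (vecA A) ** Qm (re0 B) (vecA B) = Qm (re0 B) (vecA B) ** Qm (re0 A) (vecA A)"
      using SU2_Qm[OF that(1)] SU2_Qm[OF that(2)] by simp
    then show ?thesis by (simp only: Qm_commute)
  qed
  show ?thesis unfolding p using c by (auto simp: Hom_Z2_SU2_def)
qed

definition nrm :: "real^3 \<Rightarrow> real^3" where "nrm u = (1 / norm u) *\<^sub>R u"
definition perpt :: "real \<Rightarrow> real^3 \<Rightarrow> real^3 \<Rightarrow> real^3" where
  "perpt t w v = w - (t * ((w \<bullet> v) / (v \<bullet> v))) *\<^sub>R v"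
definition frame :: "real^3 \<Rightarrow> real^3 \<Rightarrow> real^3^3" where
  "frame v w = (\<chi> i. if i = 1 then nrm v else if i = 2 then nrm (perpt 1 w v) else cross3 (nrm v) (nrm (perpt 1 w v)))"
definition M :: "real \<Rightarrow> real^3 \<Rightarrow> complex^2^2" where
  "M r u = Qm (r / sqrt (r^2 + u \<bullet> u)) ((1 / sqrt (r^2 + u \<bullet> u)) *\<^sub>R u)"

definition FF :: "(complex^2^2) \<times> (complex^2^2) \<Rightarrow> real^3^3" where
  "FF p = frame (vecA (fst p)) (vecA (snd p))"
definition GG :: "real^3^3 \<Rightarrow> (complex^2^2) \<times> (complex^2^2)" where
  "GG R = (Qm 0 (R$1), Qm 0 (R$2))"
definition HH :: "real \<times> ((complex^2^2) \<times> (complex^2^2)) \<Rightarrow> (complex^2^2) \<times> (complex^2^2)" where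
  "HH p = (M ((1 - fst p) * re0 (fst (snd p))) (vecA (fst (snd p))),
           M ((1 - fst p) * re0 (snd (snd p))) (perpt (fst p) (vecA (snd (snd p))) (vecA (fst (snd p)))))"

lemma frame_nth[simp]: "frame v w $ 1 = nrm v" "frame v w $ 2 = nrm (perpt 1 w v)"
   "frame v w $ 3 = cross3 (nrm v) (nrm (perpt 1 w v))"
  by (simp_all add: frame_def)

lemma cross_perpt: "cross3 v (perpt t w v) = cross3 v w"
  by (simp add: perpt_def cross3_simps)

lemma inner_perpt: "v \<noteq> 0 \<Longrightarrow> v \<bullet> perpt 1 w v = 0"
  by (simp add: perpt_def inner_diff_right inner_commute)

lemma norm_nrm: "u \<noteq> 0 \<Longrightarrow> norm (nrm u) = 1"
  by (simp add: nrm_def)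

lemma det3_cross: "det (vector [x,y,z] :: real^3^3) = (cross3 x y) \<bullet> z"
  by (simp add: cross3_simps)

lemma mmt: "((A::real^'n^'m) ** transpose A) $ i $ j = (A$i) \<bullet> (A$j)"
  by (simp add: matrix_matrix_mult_def transpose_def inner_vec_def)

lemma rows_SO3:
  fixes e1 e2 :: "real^3"
  assumes "norm e1 = 1" "norm e2 = 1" "e1 \<bullet> e2 = 0"
  shows "(\<chi> i. if i = 1 then e1 else if i = 2 then e2 else cross3 e1 e2) \<in> SO3"
proof -
  let ?R = "(\<chi> i. if i = 1 then e1 else if i = 2 then e2 else cross3 e1 e2) :: real^3^3"
  have R: "?R = vector [e1, e2, cross3 e1 e2]" by (simp add: vec_eq_iff forall_3)
  have n3: "(cross3 e1 e2) \<bullet> (cross3 e1 e2) = 1"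
    using norm_cross_dot[of e1 e2] assms by (simp add: power2_norm_eq_inner)
  have ee: "e1 \<bullet> e1 = 1" "e2 \<bullet> e2 = 1" using assms by (simp_all add: power2_norm_eq_inner[symmetric])
  have "?R ** transpose ?R = mat 1"
    unfolding R
    by (simp add: vec_eq_iff forall_3 mmt mat_def ee n3 dot_cross_self assms inner_commute[of e2 e1])
  then have "transpose ?R ** ?R = mat 1" using matrix_left_right_inverse by blast
  moreover have "det ?R = 1" unfolding R det3_cross using n3 by simp
  ultimately show ?thesis
    using \<open>?R ** transpose ?R = mat 1\<close> by (simp add: SO3_def orthogonal_matrix_def)
qed

lemma frame_SO3: assumes "cross3 v w \<noteq> 0" shows "frame v w \<in> SO3"
proof -
  have v: "v \<noteq> 0" using assms by auto
  have p: "perpt 1 w v \<noteq> 0" using assms cross_perpt[of v 1 w] by auto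
  have "nrm v \<bullet> nrm (perpt 1 w v) = 0"
    by (simp add: nrm_def inner_perpt[OF v])
  then have "(\<chi> i. if i = 1 then nrm v else if i = 2 then nrm (perpt 1 w v) else cross3 (nrm v) (nrm (perpt 1 w v))) \<in> SO3"
    by (intro rows_SO3) (simp_all add: norm_nrm v p)
  then show ?thesis by (simp add: frame_def)
qed

lemma SO3_rows:
  assumes "R \<in> SO3"
  shows "R$1 \<bullet> R$1 = 1" "R$2 \<bullet> R$2 = 1" "R$1 \<bullet> R$2 = 0" "R$3 = cross3 (R$1) (R$2)" "R$3 \<bullet> R$3 = 1"
proof -
  have o: "R ** transpose R = mat 1" using assms by (simp add: SO3_def orthogonal_matrix_def)
  have ip: "R$i \<bullet> R$j = (if i = j then 1 else 0)" for i j
    using o by (simp add: vec_eq_iff mmt mat_def)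
  show "R$3 \<bullet> R$3 = 1" using ip[of 3 3] by simp
  show a: "R$1 \<bullet> R$1 = 1" "R$2 \<bullet> R$2 = 1" "R$1 \<bullet> R$2 = 0" using ip[of 1 1] ip[of 2 2] ip[of 1 2] by simp_all
  have Rv: "vector [R$1, R$2, R$3] = R" by (simp add: vec_eq_iff forall_3)
  have "det R = (cross3 (R$1) (R$2)) \<bullet> R$3"
    using det3_cross[of "R$1" "R$2" "R$3"] unfolding Rv .
  then have d: "(cross3 (R$1) (R$2)) \<bullet> R$3 = 1" using assms by (simp add: SO3_def)
  have n3: "(cross3 (R$1) (R$2)) \<bullet> (cross3 (R$1) (R$2)) = 1"
    using norm_cross_dot[of "R$1" "R$2"] a by (simp add: power2_norm_eq_inner norm_eq_sqrt_inner)
  have "(R$3 - cross3 (R$1) (R$2)) \<bullet> (R$3 - cross3 (R$1) (R$2)) = 0"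
    using ip[of 3 3] d n3 by (simp add: inner_diff_left inner_diff_right inner_commute)
  then show "R$3 = cross3 (R$1) (R$2)" by simp
qed

lemma GG_X: "R \<in> SO3 \<Longrightarrow> GG R \<in> (SU2 \<times> SU2) - Hom_Z2_SU2"
proof -
  assume R: "R \<in> SO3"
  note r = SO3_rows[OF R]
  have "cross3 (R$1) (R$2) \<noteq> 0" using r(4,5) by auto
  moreover have "Qm 0 (R$1) \<in> SU2" "Qm 0 (R$2) \<in> SU2" using r(1,2) by (simp_all add: Qm_SU2)
  ultimately show ?thesis by (intro X_iff[THEN iffD2]) (simp add: GG_def)
qed

lemma FG: assumes "R \<in> SO3" shows "FF (GG R) = R"
proof -
  note r = SO3_rows[OF assms]
  have p: "perpt 1 (R$2) (R$1) = R$2" using r by (simp add: perpt_def inner_commute)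
  have n1: "nrm (R$1) = R$1" "nrm (R$2) = R$2" using r by (simp_all add: nrm_def norm_eq_sqrt_inner)
  show ?thesis using r by (simp add: FF_def GG_def vec_eq_iff forall_3 p n1)
qed

lemma FF_SO3: "p \<in> (SU2 \<times> SU2) - Hom_Z2_SU2 \<Longrightarrow> FF p \<in> SO3"
  using X_iff[of p] frame_SO3 unfolding FF_def by blast

lemma cont_vecA[continuous_intros]: "continuous_on S f \<Longrightarrow> continuous_on S (\<lambda>x. vecA (f x))"
  unfolding vecA_def
proof (rule continuous_on_vec_lambda)
  fix i :: 3 assume f: "continuous_on S f"
  show "continuous_on S (\<lambda>x. if i = 1 then Im (f x $ 1 $ 1) else if i = 2 then Re (f x $ 1 $ 2) else Im (f x $ 1 $ 2))"
    using exhaust_3[of i] by (elim disjE) (simp_all add: f continuous_intros)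
qed

lemma cont_re0[continuous_intros]: "continuous_on S f \<Longrightarrow> continuous_on S (\<lambda>x. re0 (f x))"
  unfolding re0_def by (intro continuous_intros)

lemma cont_Complex[continuous_intros]: "continuous_on S a \<Longrightarrow> continuous_on S b \<Longrightarrow> continuous_on S (\<lambda>x. Complex (a x) (b x))"
  unfolding Complex_eq by (intro continuous_intros)

lemma cont_Qm[continuous_intros]:
  assumes r: "continuous_on S r" and u: "continuous_on S u"
  shows "continuous_on S (\<lambda>x. Qm (r x) (u x))"
  unfolding Qm_def
proof (intro continuous_on_vec_lambda)
  fix i j :: 2
  show "continuous_on S (\<lambda>x. if i = 1 then (if j = 1 then Complex (r x) (u x$1) else Complex (u x$2) (u x$3))
     else (if j = 1 then Complex (-(u x$2)) (u x$3) else Complex (r x) (-(u x$1))))"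
    using exhaust_2[of i] exhaust_2[of j] by (elim disjE) (simp_all add: r u continuous_intros)
qed

lemma cont_M[continuous_intros]:
  assumes r: "continuous_on S r" and u: "continuous_on S u" and nz: "\<And>x. x \<in> S \<Longrightarrow> (r x)^2 + u x \<bullet> u x \<noteq> 0"
  shows "continuous_on S (\<lambda>x. M (r x) (u x))"
  unfolding M_def using nz by (intro continuous_intros r u) auto

lemma cont_perpt[continuous_intros]:
  assumes "continuous_on S t" "continuous_on S w" "continuous_on S v" "\<And>x. x \<in> S \<Longrightarrow> v x \<bullet> v x \<noteq> 0"
  shows "continuous_on S (\<lambda>x. perpt (t x) (w x) (v x))"
  unfolding perpt_def using assms by (intro continuous_intros) auto

lemma cont_nrm[continuous_intros]:
  assumes "continuous_on S u" "\<And>x. x \<in> S \<Longrightarrow> u x \<noteq> 0"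
  shows "continuous_on S (\<lambda>x. nrm (u x))"
  unfolding nrm_def using assms by (intro continuous_intros) auto

lemma cont_frame:
  fixes S :: "'a::t2_space set"
  assumes v: "continuous_on S v" and w: "continuous_on S w" and nz: "\<And>x. x \<in> S \<Longrightarrow> cross3 (v x) (w x) \<noteq> 0"
  shows "continuous_on S (\<lambda>x. frame (v x) (w x))"
  unfolding frame_def
proof (rule continuous_on_vec_lambda)
  fix i :: 3
  have v0: "v x \<noteq> 0" "v x \<bullet> v x \<noteq> 0" if "x \<in> S" for x using nz[OF that] by auto
  have p0: "perpt 1 (w x) (v x) \<noteq> 0" if "x \<in> S" for x using nz[OF that] cross_perpt[of "v x" 1 "w x"] by auto
  show "continuous_on S (\<lambda>x. if i = 1 then nrm (v x) else if i = 2 then nrm (perpt 1 (w x) (v x))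
     else cross3 (nrm (v x)) (nrm (perpt 1 (w x) (v x))))"
    using exhaust_3[of i] by (elim disjE) (simp_all add: v w v0 p0 continuous_intros continuous_on_cross)
qed

lemma cross_nz_pos: "cross3 v w \<noteq> 0 \<Longrightarrow> v \<bullet> v > 0 \<and> w \<bullet> w > 0"
  by (metis cross_zero_left cross_zero_right inner_gt_zero_iff)

lemma M_SU2: assumes "r^2 + u \<bullet> u > 0" shows "M r u \<in> SU2"
proof -
  let ?s = "sqrt (r^2 + u \<bullet> u)"
  have s2: "?s^2 = r^2 + u \<bullet> u" using assms by simp
  have e1: "((1/?s) *\<^sub>R u) \<bullet> ((1/?s) *\<^sub>R u) = (u \<bullet> u) / ?s^2"
    by (simp add: power2_eq_square)
  have "(r / ?s)^2 + ((1/?s) *\<^sub>R u) \<bullet> ((1/?s) *\<^sub>R u) = (r^2 + u \<bullet> u) / ?s^2"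
    unfolding e1 power_divide add_divide_distrib ..
  also have "\<dots> = 1" using s2 assms by simp
  finally show ?thesis unfolding M_def Qm_SU2 .
qed

lemma vecA_M: "vecA (M r u) = (1 / sqrt (r^2 + u \<bullet> u)) *\<^sub>R u"
  by (simp add: M_def)

lemma M_unit: "r^2 + u \<bullet> u = 1 \<Longrightarrow> M r u = Qm r u"
  by (simp add: M_def)

lemma M0: "M 0 u = Qm 0 (nrm u)"
  by (simp add: M_def nrm_def norm_eq_sqrt_inner)

lemma HH_X:
  assumes t: "t \<in> {0..1}" and p: "p \<in> (SU2 \<times> SU2) - Hom_Z2_SU2"
  shows "HH (t, p) \<in> (SU2 \<times> SU2) - Hom_Z2_SU2"
proof -
  define v where "v = vecA (fst p)"
  define w where "w = vecA (snd p)"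
  have c: "cross3 v w \<noteq> 0" using p X_iff v_def w_def by blast
  have v0: "v \<bullet> v > 0" using c by (metis cross_zero_left inner_gt_zero_iff)
  have pw: "perpt t w v \<bullet> perpt t w v > 0" using c cross_perpt[of v t w] by (metis cross_zero_right inner_gt_zero_iff)
  let ?r1 = "(1 - t) * re0 (fst p)" and ?r2 = "(1 - t) * re0 (snd p)"
  have g1: "?r1^2 + v \<bullet> v > 0" using v0 by (simp add: add_nonneg_pos)
  have g2: "?r2^2 + perpt t w v \<bullet> perpt t w v > 0" using pw by (simp add: add_nonneg_pos)
  have HH: "HH (t,p) = (M ?r1 v, M ?r2 (perpt t w v))" by (simp add: HH_def v_def w_def)
  have "cross3 (vecA (M ?r1 v)) (vecA (M ?r2 (perpt t w v)))
     = ((1 / sqrt (?r1^2 + v \<bullet> v)) * (1 / sqrt (?r2^2 + perpt t w v \<bullet> perpt t w v))) *\<^sub>R cross3 v w"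
    by (simp add: vecA_M cross_mult_left cross_mult_right cross_perpt)
  moreover have "(1 / sqrt (?r1^2 + v \<bullet> v)) * (1 / sqrt (?r2^2 + perpt t w v \<bullet> perpt t w v)) \<noteq> 0"
    using g1 g2 by simp
  ultimately have "cross3 (vecA (M ?r1 v)) (vecA (M ?r2 (perpt t w v))) \<noteq> 0" using c by simp
  then show ?thesis unfolding HH using M_SU2[OF g1] M_SU2[OF g2] by (intro X_iff[THEN iffD2]) simp
qed

lemma HH0: assumes p: "p \<in> (SU2 \<times> SU2) - Hom_Z2_SU2" shows "HH (0, p) = p"
proof -
  have a: "fst p \<in> SU2" "snd p \<in> SU2" using p X_iff[of p] by blast+
  have "M (re0 (fst p)) (vecA (fst p)) = fst p" "M (re0 (snd p)) (vecA (snd p)) = snd p"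
    using a SU2_iff M_unit by metis+
  then show ?thesis by (simp add: HH_def perpt_def)
qed

lemma HH1: "HH (1, p) = GG (FF p)"
  by (simp add: HH_def GG_def FF_def M0)

lemma cont_HH: "continuous_on ({0..1} \<times> ((SU2 \<times> SU2) - Hom_Z2_SU2)) HH"
proof -
  define D where "D = {0..1::real} \<times> ((SU2 \<times> SU2) - Hom_Z2_SU2)"
  have nz: "cross3 (vecA (fst (snd x))) (vecA (snd (snd x))) \<noteq> 0" if "x \<in> D" for x
  proof -
    have "snd x \<in> (SU2 \<times> SU2) - Hom_Z2_SU2" using that by (auto simp: D_def)
    from X_iff[of "snd x", THEN iffD1, OF this] show ?thesis by simp
  qed
  have v0: "vecA (fst (snd x)) \<bullet> vecA (fst (snd x)) > 0" if "x \<in> D" for x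
    using cross_nz_pos[OF nz[OF that]] by simp
  have pw: "perpt (fst x) (vecA (snd (snd x))) (vecA (fst (snd x))) \<bullet> perpt (fst x) (vecA (snd (snd x))) (vecA (fst (snd x))) > 0"
    if "x \<in> D" for x
    using cross_nz_pos[of "vecA (fst (snd x))" "perpt (fst x) (vecA (snd (snd x))) (vecA (fst (snd x)))"] nz[OF that]
    by (simp add: cross_perpt)
  have ca: "continuous_on D (\<lambda>x. vecA (fst (snd x)))" by (intro cont_vecA continuous_on_fst continuous_on_snd continuous_on_id)
  have cb: "continuous_on D (\<lambda>x. vecA (snd (snd x)))" by (intro cont_vecA continuous_on_fst continuous_on_snd continuous_on_id)
  have ra: "continuous_on D (\<lambda>x. (1 - fst x) * re0 (fst (snd x)))"
    by (intro continuous_on_mult continuous_on_diff continuous_on_const cont_re0 continuous_on_fst continuous_on_snd continuous_on_id)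
  have rb: "continuous_on D (\<lambda>x. (1 - fst x) * re0 (snd (snd x)))"
    by (intro continuous_on_mult continuous_on_diff continuous_on_const cont_re0 continuous_on_fst continuous_on_snd continuous_on_id)
  have cp: "continuous_on D (\<lambda>x. perpt (fst x) (vecA (snd (snd x))) (vecA (fst (snd x))))"
    by (rule cont_perpt[OF continuous_on_fst[OF continuous_on_id] cb ca]) (use v0 in \<open>simp add: less_imp_neq[symmetric]\<close>)
  have m1: "continuous_on D (\<lambda>x. M ((1 - fst x) * re0 (fst (snd x))) (vecA (fst (snd x))))"
  proof (rule cont_M[OF ra ca])
    fix x assume "x \<in> D"
    from v0[OF this] show "((1 - fst x) * re0 (fst (snd x)))\<^sup>2 + vecA (fst (snd x)) \<bullet> vecA (fst (snd x)) \<noteq> 0"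
      by (simp add: add_nonneg_pos less_imp_neq[symmetric])
  qed
  have m2: "continuous_on D (\<lambda>x. M ((1 - fst x) * re0 (snd (snd x))) (perpt (fst x) (vecA (snd (snd x))) (vecA (fst (snd x)))))"
  proof (rule cont_M[OF rb cp])
    fix x assume "x \<in> D"
    from pw[OF this] show "((1 - fst x) * re0 (snd (snd x)))\<^sup>2 + perpt (fst x) (vecA (snd (snd x))) (vecA (fst (snd x))) \<bullet> perpt (fst x) (vecA (snd (snd x))) (vecA (fst (snd x))) \<noteq> 0"
      by (simp add: add_nonneg_pos less_imp_neq[symmetric])
  qed
  show ?thesis unfolding HH_def D_def[symmetric] by (rule continuous_on_Pair[OF m1 m2])
qed

lemma cont_FF: "continuous_on ((SU2 \<times> SU2) - Hom_Z2_SU2) FF"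
  unfolding FF_def
  by (rule cont_frame[OF cont_vecA[OF continuous_on_fst[OF continuous_on_id]] cont_vecA[OF continuous_on_snd[OF continuous_on_id]]])
     (use X_iff in auto)

lemma cont_GG: "continuous_on UNIV GG"
  unfolding GG_def
  by (intro continuous_on_Pair cont_Qm continuous_on_const continuous_on_component continuous_on_id)

theorem mainTheorem13:
  shows "((SU2 \<times> SU2) - Hom_Z2_SU2) homotopy_eqv SO3"
proof -
  let ?X = "(SU2 \<times> SU2) - Hom_Z2_SU2"
  have f: "continuous_map (top_of_set ?X) (top_of_set SO3) FF"
    using cont_FF FF_SO3 by auto
  have g: "continuous_map (top_of_set SO3) (top_of_set ?X) GG"
    using continuous_on_subset[OF cont_GG] GG_X by auto
  have h1: "homotopic_with (\<lambda>x. True) (top_of_set ?X) (top_of_set ?X) id (GG \<circ> FF)"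
  proof -
    have sub: "\<forall>x\<in>{0..1} \<times> ?X. HH x \<in> ?X" using HH_X by auto
    show ?thesis
      by (simp add: homotopic_with) (rule exI[of _ HH], use sub cont_HH HH0 HH1 in \<open>simp add: image_subset_iff Pi_iff\<close>)
  qed
  have h2: "homotopic_with (\<lambda>x. True) (top_of_set SO3) (top_of_set SO3) (FF \<circ> GG) id"
    by (rule homotopic_with_equal) (use continuous_map_compose[OF g f] FG in auto)
  show ?thesis
    unfolding homotopy_equivalent_space_def
    using f g h1 h2 homotopic_with_sym by blast
qed

end
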